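(* There exist universal constants $C,c>0$ such that the following holds. Let $(X_i,Y_i)_{i=1}^{3n}$ be a stationary two-state hidden Markov model as in the context whose hidden chain has absolute spectral gap at least $\gamma^*$, i.e. $1-|1-p-q|\ge\gamma^*$. Let $Y'=(Y_1,\dots,Y_n)$ and $\tilde Y'=(Y_{2n+1},\dots,Y_{3n})$, let $\mathbb{P}_{(Y',\tilde Y')}$ be the joint law of $(Y',\tilde Y')$ and $\mathbb{P}_{Y'}$ the law of $Y'$. Then $$\|\mathbb{P}_{(Y',\tilde Y')}-\mathbb{P}_{Y'}^{\otimes2}\|_{TV}\le Ce^{-c\gamma^*n}.$$
   Context: Model: parameter $\theta=(p,q,f_0,f_1)$ with $p,q\in(0,1]$ and $f_0,f_1$ probability densities on $[0,1]$; $(X_i)$ is a Markov chain on $\{0,1\}$ started from its stationary distribution with transition matrix $\begin{pmatrix}1-p&p\\ q&1-q\end{pmatrix}$, and conditionally on $(X_i)$ the $Y_i$ are independent with densities $f_{X_i}$. $\mathbb{P}_{Y'}^{\otimes2}$ denotes the product of two copies of $\mathbb{P}_{Y'}$, and $\|\cdot\|_{TV}$ is the total variation norm. *)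

theory Defs
  imports "HOL-Probability.Probability"
begin

text \<open>Two-state HMM. Hidden states: False = state 0, True = state 1.
  Transition matrix ((1-p, p), (q, 1-q)).\<close>

definition trans_prob :: "real \<Rightarrow> real \<Rightarrow> bool \<Rightarrow> bool \<Rightarrow> real" where
  "trans_prob p q a b =
     (if \<not> a then (if b then p else 1 - p) else (if b then 1 - q else q))"

definition stat_prob :: "real \<Rightarrow> real \<Rightarrow> bool \<Rightarrow> real" where
  "stat_prob p q a = (if a then p / (p + q) else q / (p + q))"

text \<open>Probability of the hidden path x(0),...,x(N-1) (X_{i+1} = x i),
  chain started from stationarity.\<close>
definition path_prob :: "real \<Rightarrow> real \<Rightarrow> nat \<Rightarrow> (nat \<Rightarrow> bool) \<Rightarrow> real" where
  "path_prob p q N x =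
     (if N = 0 then 1
      else stat_prob p q (x 0) * (\<Prod>i<N - 1. trans_prob p q (x i) (x (Suc i))))"

definition emis :: "(real \<Rightarrow> real) \<Rightarrow> (real \<Rightarrow> real) \<Rightarrow> bool \<Rightarrow> real \<Rightarrow> real" where
  "emis f0 f1 b y = (if b then f1 y else f0 y) * indicator {0..1} y"

text \<open>Joint law of (Y_1,...,Y_N) (Y_{i+1} = y i) on the product space, given by its
  density w.r.t. N-dimensional Lebesgue measure (mixture over hidden paths).\<close>
definition hmm_law :: "real \<Rightarrow> real \<Rightarrow> (real \<Rightarrow> real) \<Rightarrow> (real \<Rightarrow> real) \<Rightarrow> nat
    \<Rightarrow> (nat \<Rightarrow> real) measure" where
  "hmm_law p q f0 f1 N =
     density (PiM {..<N} (\<lambda>_. lborel))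
       (\<lambda>y. ennreal (\<Sum>x \<in> {..<N} \<rightarrow>\<^sub>E (UNIV :: bool set).
              path_prob p q N x * (\<Prod>i<N. emis f0 f1 (x i) (y i))))"

definition law_Y' :: "real \<Rightarrow> real \<Rightarrow> (real \<Rightarrow> real) \<Rightarrow> (real \<Rightarrow> real) \<Rightarrow> nat
    \<Rightarrow> (nat \<Rightarrow> real) measure" where
  "law_Y' p q f0 f1 n =
     distr (hmm_law p q f0 f1 (3 * n)) (PiM {..<n} (\<lambda>_. lborel))
       (\<lambda>y. restrict y {..<n})"

text \<open>Joint law of (Y', Y~') with Y~' = (Y_{2n+1},...,Y_{3n}).\<close>
definition law_pair :: "real \<Rightarrow> real \<Rightarrow> (real \<Rightarrow> real) \<Rightarrow> (real \<Rightarrow> real) \<Rightarrow> nat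
    \<Rightarrow> ((nat \<Rightarrow> real) \<times> (nat \<Rightarrow> real)) measure" where
  "law_pair p q f0 f1 n =
     distr (hmm_law p q f0 f1 (3 * n))
       (PiM {..<n} (\<lambda>_. lborel) \<Otimes>\<^sub>M PiM {..<n} (\<lambda>_. lborel))
       (\<lambda>y. (restrict y {..<n}, restrict (\<lambda>i. y (2 * n + i)) {..<n}))"

definition tv_dist :: "'a measure \<Rightarrow> 'a measure \<Rightarrow> real" where
  "tv_dist M N = (SUP A \<in> sets M. \<bar>measure M A - measure N A\<bar>)"

definition prob_density01 :: "(real \<Rightarrow> real) \<Rightarrow> bool" where
  "prob_density01 f \<longleftrightarrow> f \<in> borel_measurable borel \<and> (\<forall>x\<in>{0..1}. 0 \<le> f x) \<and>
     (\<integral>\<^sup>+ x. ennreal (f x * indicator {0..1} x) \<partial>lborel) = 1"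

end

theory Submission
  imports Defs
begin


definition paths :: "nat \<Rightarrow> (nat \<Rightarrow> bool) set" where
  "paths N = {..<N} \<rightarrow>\<^sub>E (UNIV :: bool set)"

definition join :: "nat \<Rightarrow> (nat \<Rightarrow> bool) \<Rightarrow> (nat \<Rightarrow> bool) \<Rightarrow> nat \<Rightarrow> bool" where
  "join a u v = (\<lambda>i. if i < a then u i else v (i - a))"

lemma finite_paths[simp]: "finite (paths N)"
  unfolding paths_def by (intro finite_PiE) auto

lemma join_in: "u \<in> paths a \<Longrightarrow> v \<in> paths b \<Longrightarrow> join a u v \<in> paths (a + b)"
  unfolding paths_def join_def PiE_def extensional_def by auto

lemma bij_join: "bij_betw (\<lambda>(u, v). join a u v) (paths a \<times> paths b) (paths (a + b))"
proof (rule bij_betw_byWitness[where f' = "\<lambda>x. (restrict x {..<a}, \<lambda>i\<in>{..<b}. x (a + i))"])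
  show "\<forall>x\<in>paths a \<times> paths b. (\<lambda>x. (restrict x {..<a}, \<lambda>i\<in>{..<b}. x (a + i))) ((\<lambda>(u, v). join a u v) x) = x"
    unfolding paths_def join_def PiE_def extensional_def by (auto simp: fun_eq_iff)
  show "\<forall>y\<in>paths (a + b). (\<lambda>(u, v). join a u v) ((\<lambda>x. (restrict x {..<a}, \<lambda>i\<in>{..<b}. x (a + i))) y) = y"
    unfolding paths_def join_def PiE_def extensional_def by (auto simp: fun_eq_iff)
  show "(\<lambda>(u, v). join a u v) ` (paths a \<times> paths b) \<subseteq> paths (a + b)"
    using join_in by auto
  show "(\<lambda>x. (restrict x {..<a}, \<lambda>i\<in>{..<b}. x (a + i))) ` paths (a + b) \<subseteq> paths a \<times> paths b"
    unfolding paths_def PiE_def extensional_def by auto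
qed

lemma sum_join: "(\<Sum>x\<in>paths (a + b). F x) = (\<Sum>u\<in>paths a. \<Sum>v\<in>paths b. F (join a u v))"
  by (subst sum.reindex_bij_betw[OF bij_join, symmetric])
     (simp add: sum.cartesian_product case_prod_unfold)

lemma sum_paths1: "(\<Sum>x\<in>paths (Suc 0). G (x 0)) = (\<Sum>c\<in>UNIV. G c)"
proof (rule sum.reindex_bij_witness[where j = "\<lambda>x. x 0" and i = "\<lambda>c. \<lambda>i\<in>{..<Suc 0}. c"])
qed (auto simp: paths_def PiE_def extensional_def fun_eq_iff)

definition pw :: "real \<Rightarrow> real \<Rightarrow> (bool \<Rightarrow> real) \<Rightarrow> nat \<Rightarrow> (nat \<Rightarrow> bool) \<Rightarrow> real" where
  "pw p q \<mu> N x = \<mu> (x 0) * (\<Prod>i<N - 1. trans_prob p q (x i) (x (Suc i)))"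

lemma prod_lessThan_add: "(\<Prod>i<m + k. g i) = (\<Prod>i<m. g i) * (\<Prod>i<k. g (m + i))" for g :: "nat \<Rightarrow> real"
  by (induction k) (auto simp: ac_simps)

lemma pw_join:
  assumes "1 \<le> a" "1 \<le> b"
  shows "pw p q \<mu> (a + b) (join a u v) = pw p q \<mu> a u * pw p q (trans_prob p q (u (a - 1))) b v"
proof -
  let ?g = "\<lambda>i. trans_prob p q (join a u v i) (join a u v (Suc i))"
  have e: "a + b - 1 = (a - 1) + Suc (b - 1)" using assms by simp
  have "(\<Prod>i<a + b - 1. ?g i) = (\<Prod>i<a - 1. ?g i) * (\<Prod>i<Suc (b - 1). ?g (a - 1 + i))"
    unfolding e by (rule prod_lessThan_add)
  also have "(\<Prod>i<Suc (b - 1). ?g (a - 1 + i)) = ?g (a - 1) * (\<Prod>i<b - 1. ?g (a - 1 + Suc i))"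
    by (subst prod.lessThan_Suc_shift) simp
  also have "(\<Prod>i<a - 1. ?g i) = (\<Prod>i<a - 1. trans_prob p q (u i) (u (Suc i)))"
    by (rule prod.cong) (auto simp: join_def)
  also have "(\<Prod>i<b - 1. ?g (a - 1 + Suc i)) = (\<Prod>i<b - 1. trans_prob p q (v i) (v (Suc i)))"
    using assms by (intro prod.cong) (auto simp: join_def)
  also have "?g (a - 1) = trans_prob p q (u (a - 1)) (v 0)"
    using assms by (auto simp: join_def)
  finally show ?thesis using assms by (simp add: pw_def join_def ac_simps)
qed

definition Pk :: "real \<Rightarrow> real \<Rightarrow> nat \<Rightarrow> bool \<Rightarrow> bool \<Rightarrow> real" where
  "Pk p q k a c = stat_prob p q c + (1 - p - q) ^ k * ((if a = c then 1 else 0) - stat_prob p q c)"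

lemma stat_facts:
  assumes "0 < p + q"
  shows "stat_prob p q False = 1 - stat_prob p q True"
    "p * stat_prob p q False = q * stat_prob p q True"
proof -
  have h': "p + q \<noteq> 0" using assms by simp
  show "stat_prob p q False = 1 - stat_prob p q True"
    using h' by (simp add: stat_prob_def field_simps)
  show "p * stat_prob p q False = q * stat_prob p q True"
    by (simp add: stat_prob_def)
qed

lemma Pk_step: "0 < p + q \<Longrightarrow> (\<Sum>c\<in>UNIV. Pk p q k a c * trans_prob p q c d) = Pk p q (Suc k) a d"
proof -
  assume h: "0 < p + q"
  note f = stat_facts[OF h]
  show ?thesis
  proof -
    define L where "L = (1 - p - q) ^ k"
    define s where "s = stat_prob p q True"
    have P: "Pk p q k x y = (if y then s else 1 - s) + L * ((if x = y then 1 else 0) - (if y then s else 1 - s))"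
      "Pk p q (Suc k) x y = (if y then s else 1 - s) + (1 - p - q) * L * ((if x = y then 1 else 0) - (if y then s else 1 - s))"
      for x y by (auto simp: Pk_def L_def s_def f(1))
    have ps: "p * (1 - s) = q * s" using f(2) unfolding f(1) s_def .
    show ?thesis
      apply (cases a; cases d)
      apply (simp_all add: P UNIV_bool trans_prob_def)
      using ps by algebra+
  qed
qed

lemma Pk_step': "0 < p + q \<Longrightarrow> (\<Sum>b\<in>UNIV. trans_prob p q a b * Pk p q k b c) = Pk p q (Suc k) a c"
proof -
  assume h: "0 < p + q"
  note f = stat_facts[OF h]
  show ?thesis
  proof -
    define L where "L = (1 - p - q) ^ k"
    define s where "s = stat_prob p q True"
    have P: "Pk p q k x y = (if y then s else 1 - s) + L * ((if x = y then 1 else 0) - (if y then s else 1 - s))"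
      "Pk p q (Suc k) x y = (if y then s else 1 - s) + (1 - p - q) * L * ((if x = y then 1 else 0) - (if y then s else 1 - s))"
      for x y by (auto simp: Pk_def L_def s_def f(1))
    have ps: "p * (1 - s) = q * s" using f(2) unfolding f(1) s_def .
    show ?thesis
      apply (cases a; cases c)
      apply (simp_all add: P UNIV_bool trans_prob_def)
      using ps by algebra+
  qed
qed

lemma Pk_sum1: "0 < p + q \<Longrightarrow> (\<Sum>c\<in>UNIV. Pk p q k a c) = 1"
proof -
  assume "0 < p + q"
  note f = stat_facts[OF this]
  show ?thesis
    by (cases a) (auto simp: Pk_def UNIV_bool algebra_simps f(1))
qed

lemma Pk_0: "Pk p q 0 a c = (if a = c then 1 else 0)"
  by (simp add: Pk_def)

lemma markov_sum:
  assumes pq: "0 < p + q"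
  shows "(\<Sum>x\<in>paths (Suc m). pw p q \<mu> (Suc m) x * h (x m)) =
     (\<Sum>c\<in>UNIV. (\<Sum>b\<in>UNIV. \<mu> b * Pk p q m b c) * h c)"
proof (induction m arbitrary: h)
  case 0
  show ?case using sum_paths1[of "\<lambda>c. \<mu> c * h c"]
    by (simp add: pw_def Pk_0 UNIV_bool)
next
  case (Suc m)
  let ?h' = "\<lambda>c. \<Sum>d\<in>UNIV. trans_prob p q c d * h d"
  have "(\<Sum>x\<in>paths (Suc (Suc m)). pw p q \<mu> (Suc (Suc m)) x * h (x (Suc m))) =
        (\<Sum>x\<in>paths (Suc m + Suc 0). pw p q \<mu> (Suc m + Suc 0) x * h (x (Suc m)))" by simp
  also have "\<dots> = (\<Sum>u\<in>paths (Suc m). \<Sum>v\<in>paths (Suc 0).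
       pw p q \<mu> (Suc m) u * (trans_prob p q (u m) (v 0) * h (v 0)))"
    by (subst sum_join, intro sum.cong refl, subst pw_join) (auto simp: join_def pw_def)
  also have "\<dots> = (\<Sum>u\<in>paths (Suc m). pw p q \<mu> (Suc m) u * ?h' (u m))"
    by (simp add: sum_distrib_left[symmetric] sum_paths1[of "\<lambda>d. trans_prob p q _ d * h d"])
  also have "\<dots> = (\<Sum>c\<in>UNIV. (\<Sum>b\<in>UNIV. \<mu> b * Pk p q m b c) * ?h' c)"
    by (rule Suc)
  also have "\<dots> = (\<Sum>d\<in>UNIV. (\<Sum>b\<in>UNIV. \<mu> b * Pk p q (Suc m) b d) * h d)"
    by (simp add: Pk_step[OF pq, symmetric] UNIV_bool algebra_simps)
  finally show ?case .
qed

lemma pw_sum: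
  assumes pq: "0 < p + q"
  shows "(\<Sum>x\<in>paths (Suc m). pw p q \<mu> (Suc m) x) = (\<Sum>b\<in>UNIV. \<mu> b)"
proof -
  have "(\<Sum>x\<in>paths (Suc m). pw p q \<mu> (Suc m) x) = (\<Sum>x\<in>paths (Suc m). pw p q \<mu> (Suc m) x * (\<lambda>_. 1) (x m))"
    by simp
  also have "\<dots> = (\<Sum>c\<in>UNIV. (\<Sum>b\<in>UNIV. \<mu> b * Pk p q m b c))"
    by (subst markov_sum[OF pq]) simp
  also have "\<dots> = (\<Sum>b\<in>UNIV. \<mu> b)"
    by (subst sum.swap) (simp add: sum_distrib_left[symmetric] Pk_sum1[OF pq])
  finally show ?thesis .
qed


lemma trans_nonneg: "0 \<le> p \<Longrightarrow> p \<le> 1 \<Longrightarrow> 0 \<le> q \<Longrightarrow> q \<le> 1 \<Longrightarrow> 0 \<le> trans_prob p q a b"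
  by (auto simp: trans_prob_def)

lemma trans_sum: "(\<Sum>b\<in>UNIV. trans_prob p q a b) = 1"
  by (auto simp: trans_prob_def UNIV_bool)

lemma stat_nonneg: "0 < p \<Longrightarrow> 0 < q \<Longrightarrow> 0 \<le> stat_prob p q a"
  by (auto simp: stat_prob_def)

lemma stat_le1: "0 < p \<Longrightarrow> 0 < q \<Longrightarrow> stat_prob p q a \<le> 1"
  by (auto simp: stat_prob_def)

lemma pw_nonneg: "0 \<le> p \<Longrightarrow> p \<le> 1 \<Longrightarrow> 0 \<le> q \<Longrightarrow> q \<le> 1 \<Longrightarrow> (\<And>b. 0 \<le> \<mu> b) \<Longrightarrow> 0 \<le> pw p q \<mu> N x"
  unfolding pw_def by (intro mult_nonneg_nonneg prod_nonneg trans_nonneg) auto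

lemma path_prob_pw: "path_prob p q (Suc m) x = pw p q (stat_prob p q) (Suc m) x"
  by (simp add: path_prob_def pw_def)

lemma path_prob_nonneg: "0 < p \<Longrightarrow> p \<le> 1 \<Longrightarrow> 0 < q \<Longrightarrow> q \<le> 1 \<Longrightarrow> 0 \<le> path_prob p q N x"
  by (cases N) (auto simp: path_prob_pw intro!: pw_nonneg stat_nonneg, simp add: path_prob_def)

lemma restrict_join: "z \<in> paths n \<Longrightarrow> restrict (join n z w) {..<n} = z"
  by (auto simp: paths_def join_def PiE_def extensional_def fun_eq_iff)

lemma shift_join: "z' \<in> paths n \<Longrightarrow> (\<lambda>i\<in>{..<n}. join n z (join n m z') (2 * n + i)) = z'"
  by (auto simp: paths_def join_def PiE_def extensional_def fun_eq_iff)

lemma marg: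
  assumes pq: "0 < p + q" and n: "1 \<le> n" and k: "1 \<le> k"
  shows "(\<Sum>x\<in>paths (n + k). pw p q \<mu> (n + k) x * G (restrict x {..<n})) = (\<Sum>z\<in>paths n. pw p q \<mu> n z * G z)"
proof -
  have s1: "(\<Sum>w\<in>paths k. pw p q (trans_prob p q a) k w) = 1" for a
    using pw_sum[OF pq, where m="k - 1" and \<mu>="trans_prob p q a"] k trans_sum[of p q a] by simp
  have "(\<Sum>x\<in>paths (n + k). pw p q \<mu> (n + k) x * G (restrict x {..<n})) =
     (\<Sum>z\<in>paths n. \<Sum>w\<in>paths k. pw p q \<mu> n z * G z * pw p q (trans_prob p q (z (n - 1))) k w)"
    by (subst sum_join, intro sum.cong refl) (simp add: restrict_join pw_join[OF n k])
  also have "\<dots> = (\<Sum>z\<in>paths n. pw p q \<mu> n z * G z)"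
    by (simp add: sum_distrib_left[symmetric] s1)
  finally show ?thesis .
qed

lemma Pk_dev:
  assumes "0 < p" "0 < q"
  shows "\<bar>Pk p q k a c - stat_prob p q c\<bar> \<le> \<bar>1 - p - q\<bar> ^ k"
proof -
  have "\<bar>(if a = c then 1 else 0) - stat_prob p q c\<bar> \<le> 1"
    using stat_nonneg[OF assms, of c] stat_le1[OF assms, of c] by auto
  then have "\<bar>1 - p - q\<bar> ^ k * \<bar>(if a = c then 1 else 0) - stat_prob p q c\<bar> \<le> \<bar>1 - p - q\<bar> ^ k"
    by (simp add: mult_left_le)
  then show ?thesis by (simp add: Pk_def abs_mult power_abs)
qed


lemma paths0: "paths 0 = {\<lambda>_. undefined}"
  by (simp add: paths_def)

lemma comb_main:
  assumes p: "0 < p" "p \<le> 1" and q: "0 < q" "q \<le> 1"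
    and F: "\<And>z z'. 0 \<le> F z z'" "\<And>z z'. F z z' \<le> 1"
  shows "\<bar>(\<Sum>x\<in>paths (3 * n). path_prob p q (3 * n) x * F (restrict x {..<n}) (\<lambda>i\<in>{..<n}. x (2 * n + i)))
     - (\<Sum>x\<in>paths (3 * n). \<Sum>x'\<in>paths (3 * n). path_prob p q (3 * n) x * path_prob p q (3 * n) x' *
          F (restrict x {..<n}) (restrict x' {..<n}))\<bar> \<le> 2 * \<bar>1 - p - q\<bar> ^ (n + 1)"
proof (cases "n = 0")
  case True
  then show ?thesis by (simp add: paths0 path_prob_def)
next
  case False
  then have n: "1 \<le> n" by simp
  have pq: "0 < p + q" using p q by simp
  define T where "T = trans_prob p q"
  define \<pi> where "\<pi> = stat_prob p q"
  define tl where "tl = pw p q (\<lambda>_. 1) n"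
  have e3: "3 * n = n + (n + n)" by simp
  have nn: "1 \<le> n + n" using n by simp
  have ppw: "path_prob p q (n + (n + n)) x = pw p q \<pi> (n + (n + n)) x" for x
    using n path_prob_pw[of p q "n + (n + n) - 1" x] by (simp add: \<pi>_def)
  have ppw': "path_prob p q (n + (n + n)) x = pw p q \<pi> (n + (n + n)) x" for x
    using ppw .
  have pw_tl: "pw p q \<mu> n z = \<mu> (z 0) * tl z" for \<mu> z
    by (simp add: tl_def pw_def)
  have inner: "(\<Sum>m\<in>paths n. pw p q (T a) n m * pw p q (T (m (n - 1))) n z') = Pk p q (Suc n) a (z' 0) * tl z'" for a z'
  proof -
    obtain k where k: "n = Suc k" using n by (cases n) auto
    have "(\<Sum>m\<in>paths n. pw p q (T a) n m * pw p q (T (m (n - 1))) n z') =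
        (\<Sum>m\<in>paths (Suc k). pw p q (T a) (Suc k) m * (\<lambda>c. T c (z' 0) * tl z') (m k))"
      by (simp add: k pw_tl[unfolded k])
    also have "\<dots> = (\<Sum>c\<in>UNIV. (\<Sum>b\<in>UNIV. T a b * Pk p q k b c) * (T c (z' 0) * tl z'))"
      by (rule markov_sum[OF pq])
    also have "\<dots> = (\<Sum>c\<in>UNIV. Pk p q n a c * T c (z' 0)) * tl z'"
      by (simp add: T_def Pk_step'[OF pq] k sum_distrib_right mult.assoc)
    also have "\<dots> = Pk p q (Suc n) a (z' 0) * tl z'"
      by (simp add: T_def Pk_step[OF pq])
    finally show ?thesis .
  qed
  have S1: "(\<Sum>x\<in>paths (3 * n). path_prob p q (3 * n) x * F (restrict x {..<n}) (\<lambda>i\<in>{..<n}. x (2 * n + i)))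
      = (\<Sum>z\<in>paths n. \<Sum>z'\<in>paths n. pw p q \<pi> n z * Pk p q (Suc n) (z (n - 1)) (z' 0) * tl z' * F z z')"
  proof -
    have "(\<Sum>x\<in>paths (3 * n). path_prob p q (3 * n) x * F (restrict x {..<n}) (\<lambda>i\<in>{..<n}. x (2 * n + i)))
      = (\<Sum>z\<in>paths n. \<Sum>m\<in>paths n. \<Sum>z'\<in>paths n.
           pw p q \<pi> n z * pw p q (T (z (n - 1))) n m * pw p q (T (m (n - 1))) n z' * F z z')"
      unfolding e3 ppw
      apply (subst sum_join)
      apply (rule sum.cong[OF refl])
      apply (subst sum_join)
      apply (rule sum.cong[OF refl])+
      apply (simp add: restrict_join shift_join pw_join[OF n nn] pw_join[OF n n] T_def)
      done
    also have "\<dots> = (\<Sum>z\<in>paths n. \<Sum>z'\<in>paths n. pw p q \<pi> n z * F z z' *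
           (\<Sum>m\<in>paths n. pw p q (T (z (n - 1))) n m * pw p q (T (m (n - 1))) n z'))"
      apply (rule sum.cong[OF refl])
      apply (subst sum.swap)
      apply (rule sum.cong[OF refl])
      apply (simp add: sum_distrib_left mult_ac)
      done
    also have "\<dots> = (\<Sum>z\<in>paths n. \<Sum>z'\<in>paths n. pw p q \<pi> n z * Pk p q (Suc n) (z (n - 1)) (z' 0) * tl z' * F z z')"
      by (simp only: inner) (simp add: mult_ac)
    finally show ?thesis .
  qed
  have S2: "(\<Sum>x\<in>paths (3 * n). \<Sum>x'\<in>paths (3 * n). path_prob p q (3 * n) x * path_prob p q (3 * n) x' *
          F (restrict x {..<n}) (restrict x' {..<n}))
      = (\<Sum>z\<in>paths n. \<Sum>z'\<in>paths n. pw p q \<pi> n z * (\<pi> (z' 0) * tl z') * F z z')"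
  proof -
    have "(\<Sum>x\<in>paths (3 * n). \<Sum>x'\<in>paths (3 * n). path_prob p q (3 * n) x * path_prob p q (3 * n) x' *
          F (restrict x {..<n}) (restrict x' {..<n}))
       = (\<Sum>x\<in>paths (n + (n + n)). pw p q \<pi> (n + (n + n)) x *
           (\<lambda>z. \<Sum>x'\<in>paths (n + (n + n)). pw p q \<pi> (n + (n + n)) x' * (\<lambda>z'. F z z') (restrict x' {..<n})) (restrict x {..<n}))"
      unfolding e3 ppw by (simp add: sum_distrib_left mult_ac)
    also have "\<dots> = (\<Sum>z\<in>paths n. pw p q \<pi> n z *
           (\<Sum>x'\<in>paths (n + (n + n)). pw p q \<pi> (n + (n + n)) x' * (\<lambda>z'. F z z') (restrict x' {..<n})))"
      by (rule marg[OF pq n nn])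
    also have "\<dots> = (\<Sum>z\<in>paths n. pw p q \<pi> n z * (\<Sum>z'\<in>paths n. pw p q \<pi> n z' * F z z'))"
      by (simp add: marg[OF pq n nn])
    also have "\<dots> = (\<Sum>z\<in>paths n. \<Sum>z'\<in>paths n. pw p q \<pi> n z * (\<pi> (z' 0) * tl z') * F z z')"
      by (simp add: sum_distrib_left pw_tl[of \<pi>] mult_ac)
    finally show ?thesis .
  qed
  have pwn: "0 \<le> pw p q \<pi> n z" for z
    using p q by (intro pw_nonneg) (auto simp: \<pi>_def intro: stat_nonneg)
  have tln: "0 \<le> tl z" for z
    using p q unfolding tl_def by (intro pw_nonneg) auto
  have sum_pi: "(\<Sum>z\<in>paths n. pw p q \<pi> n z) = 1"
    using pw_sum[OF pq, where m = "n - 1" and \<mu> = \<pi>] n stat_facts(1)[OF pq]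
    by (simp add: \<pi>_def UNIV_bool add.commute)
  have sum_tl: "(\<Sum>z\<in>paths n. tl z) = 2"
    using pw_sum[OF pq, where m = "n - 1" and \<mu> = "\<lambda>_. 1"] n by (simp add: tl_def UNIV_bool)
  let ?L = "\<bar>1 - p - q\<bar> ^ (n + 1)"
  have "\<bar>(\<Sum>z\<in>paths n. \<Sum>z'\<in>paths n. pw p q \<pi> n z * Pk p q (Suc n) (z (n - 1)) (z' 0) * tl z' * F z z')
      - (\<Sum>z\<in>paths n. \<Sum>z'\<in>paths n. pw p q \<pi> n z * (\<pi> (z' 0) * tl z') * F z z')\<bar>
    = \<bar>\<Sum>z\<in>paths n. \<Sum>z'\<in>paths n. pw p q \<pi> n z * tl z' * ((Pk p q (Suc n) (z (n - 1)) (z' 0) - \<pi> (z' 0)) * F z z')\<bar>"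
    by (simp add: sum_subtractf[symmetric] algebra_simps)
  also have "\<dots> \<le> (\<Sum>z\<in>paths n. \<Sum>z'\<in>paths n. \<bar>pw p q \<pi> n z * tl z' * ((Pk p q (Suc n) (z (n - 1)) (z' 0) - \<pi> (z' 0)) * F z z')\<bar>)"
    by (rule order_trans[OF sum_abs sum_mono]) (rule sum_abs)
  also have "\<dots> \<le> (\<Sum>z\<in>paths n. \<Sum>z'\<in>paths n. pw p q \<pi> n z * tl z' * ?L)"
  proof (intro sum_mono)
    fix z z'
    have "\<bar>(Pk p q (Suc n) (z (n - 1)) (z' 0) - \<pi> (z' 0)) * F z z'\<bar> \<le> ?L * 1"
      unfolding abs_mult using Pk_dev[OF p(1) q(1), of "Suc n" "z (n - 1)" "z' 0"] F[of z z']
      by (intro mult_mono) (auto simp: \<pi>_def)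
    then show "\<bar>pw p q \<pi> n z * tl z' * ((Pk p q (Suc n) (z (n - 1)) (z' 0) - \<pi> (z' 0)) * F z z')\<bar>
        \<le> pw p q \<pi> n z * tl z' * ?L"
      using pwn[of z] tln[of z'] by (simp add: abs_mult mult_left_mono)
  qed
  also have "\<dots> = ?L * (\<Sum>z\<in>paths n. pw p q \<pi> n z) * (\<Sum>z'\<in>paths n. tl z')"
    by (simp add: sum_distrib_left sum_distrib_right mult_ac)
  also have "\<dots> = 2 * ?L" by (simp add: sum_pi sum_tl)
  finally show ?thesis unfolding S1 S2 .
qed



definition D :: "(real \<Rightarrow> real) \<Rightarrow> (real \<Rightarrow> real) \<Rightarrow> bool \<Rightarrow> real measure" where
  "D f0 f1 b = density lborel (\<lambda>y. ennreal (emis f0 f1 b y))"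

lemma sets_D[simp, measurable_cong]: "sets (D f0 f1 b) = sets borel"
  by (simp add: D_def)

lemma space_D[simp]: "space (D f0 f1 b) = UNIV"
  by (simp add: D_def)

context
  fixes f0 f1 :: "real \<Rightarrow> real"
  assumes f0: "prob_density01 f0" and f1: "prob_density01 f1"
begin

lemma f0_meas[measurable]: "f0 \<in> borel_measurable borel"
  using f0 by (simp add: prob_density01_def)

lemma f1_meas[measurable]: "f1 \<in> borel_measurable borel"
  using f1 by (simp add: prob_density01_def)

lemma emis_meas[measurable]: "emis f0 f1 b \<in> borel_measurable borel"
  unfolding emis_def by measurable

lemma emis_nonneg: "0 \<le> emis f0 f1 b y"
  using f0 f1 by (auto simp: emis_def prob_density01_def indicator_def)

lemma prob_D: "prob_space (D f0 f1 b)"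
proof (rule prob_spaceI)
  have "emeasure (D f0 f1 b) (space (D f0 f1 b)) = (\<integral>\<^sup>+ y. ennreal (emis f0 f1 b y) \<partial>lborel)"
    by (simp add: D_def emeasure_density)
  also have "\<dots> = 1"
    using f0 f1 by (cases b) (simp_all add: emis_def prob_density01_def)
  finally show "emeasure (D f0 f1 b) (space (D f0 f1 b)) = 1" .
qed

lemma psf_D: "product_sigma_finite (\<lambda>i. D f0 f1 (x i))"
  unfolding product_sigma_finite_def
  using prob_D by (auto intro: prob_space_imp_sigma_finite)

lemma ppsf_D: "product_prob_space (\<lambda>i. D f0 f1 (x i))"
  unfolding product_prob_space_def product_prob_space_axioms_def
  using prob_D psf_D by auto

lemma PiM_D:
  assumes I: "finite I"
  shows "PiM I (\<lambda>i. D f0 f1 (x i)) = density (PiM I (\<lambda>_. lborel)) (\<lambda>y. \<Prod>i\<in>I. ennreal (emis f0 f1 (x i) (y i)))"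
proof (rule product_sigma_finite.PiM_eqI[OF psf_D I, symmetric])
  show "sets (density (PiM I (\<lambda>_. lborel)) (\<lambda>y. \<Prod>i\<in>I. ennreal (emis f0 f1 (x i) (y i)))) = sets (PiM I (\<lambda>i. D f0 f1 (x i)))"
    by (simp cong: sets_PiM_cong)
  fix A assume A: "\<And>i. i \<in> I \<Longrightarrow> A i \<in> sets (D f0 f1 (x i))"
  then have A': "A i \<in> sets borel" if "i \<in> I" for i using that by simp
  have "emeasure (density (PiM I (\<lambda>_. lborel)) (\<lambda>y. \<Prod>i\<in>I. ennreal (emis f0 f1 (x i) (y i)))) (Pi\<^sub>E I A)
      = (\<integral>\<^sup>+ y. (\<Prod>i\<in>I. ennreal (emis f0 f1 (x i) (y i))) * indicator (Pi\<^sub>E I A) y \<partial>PiM I (\<lambda>_. lborel))"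
    using A' by (intro emeasure_density) (auto intro!: sets_PiM_I_finite I)
  also have "\<dots> = (\<integral>\<^sup>+ y. (\<Prod>i\<in>I. ennreal (emis f0 f1 (x i) (y i)) * indicator (A i) (y i)) \<partial>PiM I (\<lambda>_. lborel))"
    using I by (intro nn_integral_cong)
       (auto simp: prod.distrib indicator_def space_PiM PiE_iff prod.neutral_const intro: prod_zero)
  also have "\<dots> = (\<Prod>i\<in>I. \<integral>\<^sup>+ y. ennreal (emis f0 f1 (x i) y) * indicator (A i) y \<partial>lborel)"
    using A' by (intro product_sigma_finite.product_nn_integral_prod I)
      (auto simp: product_sigma_finite_def intro: sigma_finite_lborel)
  also have "\<dots> = (\<Prod>i\<in>I. emeasure (D f0 f1 (x i)) (A i))"
    using A' by (intro prod.cong refl) (simp add: D_def emeasure_density)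
  finally show "emeasure (density (PiM I (\<lambda>_. lborel)) (\<lambda>y. \<Prod>i\<in>I. ennreal (emis f0 f1 (x i) (y i)))) (Pi\<^sub>E I A)
      = (\<Prod>i\<in>I. emeasure (D f0 f1 (x i)) (A i))" .
qed


definition Q :: "nat set \<Rightarrow> (nat \<Rightarrow> bool) \<Rightarrow> (nat \<Rightarrow> real) measure" where
  "Q I x = PiM I (\<lambda>i. D f0 f1 (x i))"

lemma sets_Q[measurable_cong]: "sets (Q I x) = sets (PiM I (\<lambda>_. lborel))"
  unfolding Q_def by (rule sets_PiM_cong) auto

lemma space_Q: "space (Q I x) = space (PiM I (\<lambda>_. lborel))"
  using sets_eq_imp_space_eq[OF sets_Q] .

lemma prob_Q: "prob_space (Q I x)"
  unfolding Q_def by (intro prob_space_PiM prob_D)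

lemma dens_meas[measurable]:
  "(\<lambda>y. \<Prod>i\<in>I. ennreal (emis f0 f1 (x i) (y i))) \<in> borel_measurable (PiM I (\<lambda>_. lborel))"
  by measurable

lemma hmm_mix:
  assumes p: "0 < p" "p \<le> 1" and q: "0 < q" "q \<le> 1"
  assumes g[measurable]: "g \<in> borel_measurable (PiM {..<N} (\<lambda>_. lborel))"
  shows "(\<integral>\<^sup>+ y. g y \<partial>hmm_law p q f0 f1 N) = (\<Sum>x\<in>paths N. ennreal (path_prob p q N x) * (\<integral>\<^sup>+ y. g y \<partial>Q {..<N} x))"
proof -
  have eq: "ennreal (\<Sum>x \<in> {..<N} \<rightarrow>\<^sub>E (UNIV :: bool set). path_prob p q N x * (\<Prod>i<N. emis f0 f1 (x i) (y i)))
     = (\<Sum>x\<in>paths N. ennreal (path_prob p q N x) * (\<Prod>i<N. ennreal (emis f0 f1 (x i) (y i))))" for y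
    using path_prob_nonneg[OF p q] emis_nonneg
    by (simp add: paths_def sum_ennreal[symmetric] prod_nonneg ennreal_mult prod_ennreal)
  have "(\<integral>\<^sup>+ y. g y \<partial>hmm_law p q f0 f1 N) =
     (\<integral>\<^sup>+ y. (\<Sum>x\<in>paths N. ennreal (path_prob p q N x) * (\<Prod>i<N. ennreal (emis f0 f1 (x i) (y i)))) * g y \<partial>PiM {..<N} (\<lambda>_. lborel))"
    unfolding hmm_law_def eq[symmetric] by (rule nn_integral_density) measurable
  also have "\<dots> = (\<Sum>x\<in>paths N. ennreal (path_prob p q N x) * (\<integral>\<^sup>+ y. (\<Prod>i<N. ennreal (emis f0 f1 (x i) (y i))) * g y \<partial>PiM {..<N} (\<lambda>_. lborel)))"
    by (simp add: sum_distrib_right mult.assoc nn_integral_sum nn_integral_cmult)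
  also have "\<dots> = (\<Sum>x\<in>paths N. ennreal (path_prob p q N x) * (\<integral>\<^sup>+ y. g y \<partial>Q {..<N} x))"
    by (simp add: Q_def PiM_D nn_integral_density)
  finally show ?thesis .
qed

lemma hmm_mix_emeasure:
  assumes p: "0 < p" "p \<le> 1" and q: "0 < q" "q \<le> 1"
  assumes S: "S \<in> sets (PiM {..<N} (\<lambda>_. lborel))"
  shows "emeasure (hmm_law p q f0 f1 N) S = (\<Sum>x\<in>paths N. ennreal (path_prob p q N x) * emeasure (Q {..<N} x) S)"
proof -
  have sS: "S \<in> sets (hmm_law p q f0 f1 N)" "S \<in> sets (Q {..<N} x)" for x
    using S by (simp_all add: hmm_law_def sets_Q)
  show ?thesis
    using hmm_mix[OF p q, of "indicator S" N] S sS
    by simp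
qed

lemma sets_hmm[measurable_cong]: "sets (hmm_law p q f0 f1 N) = sets (PiM {..<N} (\<lambda>_. lborel))"
  by (simp add: hmm_law_def)


lemma distr_Q_pair:
  "distr (Q {..<3 * n} x) (PiM {..<n} (\<lambda>_. lborel) \<Otimes>\<^sub>M PiM {..<n} (\<lambda>_. lborel))
      (\<lambda>y. (restrict y {..<n}, restrict (\<lambda>i. y (2 * n + i)) {..<n}))
   = Q {..<n} x \<Otimes>\<^sub>M Q {..<n} (\<lambda>i. x (2 * n + i))"
proof -
  let ?M = "\<lambda>i. D f0 f1 (x i)"
  let ?I = "{..<n}" and ?J = "{2 * n..<3 * n}" and ?K = "{..<3 * n}"
  let ?Pn = "PiM {..<n} (\<lambda>_. lborel) :: (nat \<Rightarrow> real) measure"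
  let ?S = "?Pn \<Otimes>\<^sub>M ?Pn"
  let ?h = "\<lambda>y. (restrict y {..<n}, restrict (\<lambda>i. y (2 * n + i)) {..<n})"
  let ?h2 = "\<lambda>w. (restrict w ?I, restrict (\<lambda>i. w (2 * n + i)) {..<n})"
  let ?rv = "\<lambda>v. restrict (\<lambda>i. v (2 * n + i)) {..<n}"
  interpret pp: product_prob_space ?M by (rule ppsf_D)
  have IJ: "?I \<inter> ?J = {}" by auto
  have IJK: "?I \<union> ?J \<subseteq> ?K" by auto
  have h2m[measurable]: "?h2 \<in> measurable (PiM (?I \<union> ?J) ?M) ?S"
    by measurable
  have restr_m: "(\<lambda>y. restrict y (?I \<union> ?J)) \<in> measurable (PiM ?K ?M) (PiM (?I \<union> ?J) ?M)"
    using IJK by (intro measurable_restrict_subset)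
  have "distr (Q ?K x) ?S ?h = distr (PiM ?K ?M) ?S (?h2 \<circ> (\<lambda>y. restrict y (?I \<union> ?J)))"
    unfolding Q_def by (intro distr_cong refl) (auto simp: space_PiM PiE_iff fun_eq_iff)
  also have "\<dots> = distr (distr (PiM ?K ?M) (PiM (?I \<union> ?J) ?M) (\<lambda>y. restrict y (?I \<union> ?J))) ?S ?h2"
    by (rule distr_distr[symmetric, OF h2m restr_m])
  also have "distr (PiM ?K ?M) (PiM (?I \<union> ?J) ?M) (\<lambda>y. restrict y (?I \<union> ?J)) = PiM (?I \<union> ?J) ?M"
    using IJK by (rule pp.distr_restrict[symmetric]) simp
  also have "PiM (?I \<union> ?J) ?M = distr (PiM ?I ?M \<Otimes>\<^sub>M PiM ?J ?M) (PiM (?I \<union> ?J) ?M) (merge ?I ?J)"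
    using IJ by (rule pp.distr_merge[symmetric]) auto
  also have "distr \<dots> ?S ?h2 = distr (PiM ?I ?M \<Otimes>\<^sub>M PiM ?J ?M) ?S (?h2 \<circ> merge ?I ?J)"
    by (rule distr_distr) measurable
  also have "\<dots> = distr (PiM ?I ?M \<Otimes>\<^sub>M PiM ?J ?M) (?Pn \<Otimes>\<^sub>M ?Pn) (\<lambda>(u, v). ((\<lambda>x. x) u, ?rv v))"
    by (intro distr_cong refl)
       (auto simp: space_pair_measure space_PiM PiE_iff merge_def fun_eq_iff extensional_def)
  also have "\<dots> = distr (PiM ?I ?M) ?Pn (\<lambda>x. x) \<Otimes>\<^sub>M distr (PiM ?J ?M) ?Pn ?rv"
  proof (rule pair_measure_distr[symmetric])
    show "(\<lambda>x. x) \<in> measurable (PiM ?I ?M) ?Pn"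
      by (rule measurable_ident_sets) (rule sets_PiM_cong, auto)
    show rvm: "?rv \<in> measurable (PiM ?J ?M) ?Pn"
      by measurable
    show "sigma_finite_measure (distr (PiM ?J ?M) ?Pn ?rv)"
      by (intro prob_space_imp_sigma_finite prob_space.prob_space_distr rvm prob_space_PiM prob_D)
  qed
  also have "distr (PiM ?I ?M) ?Pn (\<lambda>x. x) = Q {..<n} x"
    unfolding Q_def by (rule distr_id2) (rule sets_PiM_cong, auto)
  also have "distr (PiM ?J ?M) ?Pn ?rv = distr (PiM ?J ?M) (PiM {..<n} (\<lambda>i. ?M (2 * n + i))) ?rv"
    by (intro distr_cong refl) (rule sets_PiM_cong, auto)
  also have "\<dots> = PiM {..<n} (\<lambda>i. ?M (2 * n + i))"
    by (rule distr_PiM_reindex) (auto intro: prob_D inj_onI)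
  finally show ?thesis unfolding Q_def .
qed


lemma Q_restrict: "Q I x = Q I (restrict x I)"
  unfolding Q_def by (rule PiM_cong) auto

lemma hmm_finite: "0 < p \<Longrightarrow> p \<le> 1 \<Longrightarrow> 0 < q \<Longrightarrow> q \<le> 1 \<Longrightarrow> finite_measure (hmm_law p q f0 f1 N)"
proof (rule finite_measureI)
  assume p: "0 < p" "p \<le> 1" and q: "0 < q" "q \<le> 1"
  have "emeasure (hmm_law p q f0 f1 N) (space (hmm_law p q f0 f1 N)) =
     (\<Sum>x\<in>paths N. ennreal (path_prob p q N x) * emeasure (Q {..<N} x) (space (PiM {..<N} (\<lambda>_. lborel))))"
    using hmm_mix_emeasure[OF p q, of "space (PiM {..<N} (\<lambda>_. lborel))" N]
    by (simp add: hmm_law_def)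
  also have "\<dots> = (\<Sum>x\<in>paths N. ennreal (path_prob p q N x))"
  proof -
    have "emeasure (Q I x) (space (PiM I (\<lambda>_. lborel))) = 1" for I x
      using prob_space.emeasure_space_1[OF prob_Q, of I x] by (simp add: space_Q)
    then show ?thesis by simp
  qed
  finally show "emeasure (hmm_law p q f0 f1 N) (space (hmm_law p q f0 f1 N)) \<noteq> \<infinity>"
    by (simp add: ennreal_sum_eq_top)
qed

lemma law_pair_emeasure:
  assumes p: "0 < p" "p \<le> 1" and q: "0 < q" "q \<le> 1"
  assumes A: "A \<in> sets (PiM {..<n} (\<lambda>_. lborel) \<Otimes>\<^sub>M PiM {..<n} (\<lambda>_. lborel))"
  shows "emeasure (law_pair p q f0 f1 n) A = (\<Sum>x\<in>paths (3 * n). ennreal (path_prob p q (3 * n) x) *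
     emeasure (Q {..<n} (restrict x {..<n}) \<Otimes>\<^sub>M Q {..<n} (\<lambda>i\<in>{..<n}. x (2 * n + i))) A)"
proof -
  let ?S = "PiM {..<n} (\<lambda>_. lborel) \<Otimes>\<^sub>M PiM {..<n} (\<lambda>_. lborel)"
  let ?h = "\<lambda>y. (restrict y {..<n}, restrict (\<lambda>i. y (2 * n + i)) {..<n})"
  have hm[measurable]: "?h \<in> measurable (PiM {..<3 * n} (\<lambda>_. lborel)) ?S"
    by measurable
  have hmH: "?h \<in> measurable (hmm_law p q f0 f1 (3 * n)) ?S"
    by (simp add: hmm_law_def)
  have hmQ: "?h \<in> measurable (Q {..<3 * n} x) ?S" for x
    by (subst measurable_cong_sets[OF sets_Q refl]) simp
  have pre: "?h -` A \<inter> space (PiM {..<3 * n} (\<lambda>_. lborel)) \<in> sets (PiM {..<3 * n} (\<lambda>_. lborel))"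
    using A by measurable
  have "emeasure (law_pair p q f0 f1 n) A = emeasure (hmm_law p q f0 f1 (3 * n)) (?h -` A \<inter> space (PiM {..<3 * n} (\<lambda>_. lborel)))"
    unfolding law_pair_def using A hmH by (subst emeasure_distr) (simp_all add: hmm_law_def)
  also have "\<dots> = (\<Sum>x\<in>paths (3 * n). ennreal (path_prob p q (3 * n) x) *
       emeasure (Q {..<3 * n} x) (?h -` A \<inter> space (PiM {..<3 * n} (\<lambda>_. lborel))))"
    by (rule hmm_mix_emeasure[OF p q pre])
  also have "\<dots> = (\<Sum>x\<in>paths (3 * n). ennreal (path_prob p q (3 * n) x) *
       emeasure (distr (Q {..<3 * n} x) ?S ?h) A)"
    using A hmQ by (intro sum.cong refl) (simp add: emeasure_distr space_Q)
  also have "\<dots> = (\<Sum>x\<in>paths (3 * n). ennreal (path_prob p q (3 * n) x) *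
     emeasure (Q {..<n} (restrict x {..<n}) \<Otimes>\<^sub>M Q {..<n} (\<lambda>i\<in>{..<n}. x (2 * n + i))) A)"
    by (simp only: distr_Q_pair Q_restrict[symmetric])
  finally show ?thesis .
qed


definition GY :: "real \<Rightarrow> real \<Rightarrow> nat \<Rightarrow> (nat \<Rightarrow> real) \<Rightarrow> ennreal" where
  "GY p q n y = (\<Sum>x\<in>paths (3 * n). ennreal (path_prob p q (3 * n) x) * (\<Prod>i\<in>{..<n}. ennreal (emis f0 f1 (x i) (y i))))"

lemma GY_meas[measurable]: "GY p q n \<in> borel_measurable (PiM {..<n} (\<lambda>_. lborel))"
  unfolding GY_def by measurable

lemma law_Y'_dens:
  assumes p: "0 < p" "p \<le> 1" and q: "0 < q" "q \<le> 1"
  shows "law_Y' p q f0 f1 n = density (PiM {..<n} (\<lambda>_. lborel)) (GY p q n)"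
proof (rule measure_eqI)
  let ?Pn = "PiM {..<n} (\<lambda>_. lborel) :: (nat \<Rightarrow> real) measure"
  show "sets (law_Y' p q f0 f1 n) = sets (density ?Pn (GY p q n))"
    by (simp add: law_Y'_def)
  fix B assume "B \<in> sets (law_Y' p q f0 f1 n)"
  then have B[measurable]: "B \<in> sets ?Pn" by (simp add: law_Y'_def)
  have rm[measurable]: "(\<lambda>y. restrict y {..<n}) \<in> measurable (PiM {..<3 * n} (\<lambda>_. lborel)) ?Pn"
    by measurable
  have rmQ: "(\<lambda>y. restrict y {..<n}) \<in> measurable (Q {..<3 * n} x) ?Pn" for x
    by (subst measurable_cong_sets[OF sets_Q refl]) simp
  have pre: "(\<lambda>y. restrict y {..<n}) -` B \<inter> space (PiM {..<3 * n} (\<lambda>_. lborel)) \<in> sets (PiM {..<3 * n} (\<lambda>_. lborel))"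
    by measurable
  have dQ: "distr (Q {..<3 * n} x) ?Pn (\<lambda>y. restrict y {..<n}) = Q {..<n} x" for x
  proof -
    interpret pp: product_prob_space "\<lambda>i. D f0 f1 (x i)" by (rule ppsf_D)
    have "Q {..<n} x = distr (Q {..<3 * n} x) (PiM {..<n} (\<lambda>i. D f0 f1 (x i))) (\<lambda>y. restrict y {..<n})"
      unfolding Q_def by (rule pp.distr_restrict) auto
    also have "\<dots> = distr (Q {..<3 * n} x) ?Pn (\<lambda>y. restrict y {..<n})"
      by (intro distr_cong refl) (rule sets_PiM_cong, auto)
    finally show ?thesis ..
  qed
  have "emeasure (law_Y' p q f0 f1 n) B = emeasure (hmm_law p q f0 f1 (3 * n)) ((\<lambda>y. restrict y {..<n}) -` B \<inter> space (PiM {..<3 * n} (\<lambda>_. lborel)))"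
    unfolding law_Y'_def by (subst emeasure_distr) (simp_all add: hmm_law_def)
  also have "\<dots> = (\<Sum>x\<in>paths (3 * n). ennreal (path_prob p q (3 * n) x) *
       emeasure (Q {..<3 * n} x) ((\<lambda>y. restrict y {..<n}) -` B \<inter> space (PiM {..<3 * n} (\<lambda>_. lborel))))"
    by (rule hmm_mix_emeasure[OF p q pre])
  also have "\<dots> = (\<Sum>x\<in>paths (3 * n). ennreal (path_prob p q (3 * n) x) * emeasure (Q {..<n} x) B)"
    using rmQ by (intro sum.cong refl) (simp add: emeasure_distr space_Q dQ[symmetric])
  also have "\<dots> = emeasure (density ?Pn (GY p q n)) B"
  proof -
    have "emeasure (density ?Pn (GY p q n)) B = (\<integral>\<^sup>+ y. GY p q n y * indicator B y \<partial>?Pn)"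
      by (rule emeasure_density) measurable
    also have "\<dots> = (\<Sum>x\<in>paths (3 * n). ennreal (path_prob p q (3 * n) x) *
        (\<integral>\<^sup>+ y. (\<Prod>i\<in>{..<n}. ennreal (emis f0 f1 (x i) (y i))) * indicator B y \<partial>?Pn))"
      unfolding GY_def
      by (simp add: sum_distrib_right mult.assoc nn_integral_sum nn_integral_cmult)
    also have "\<dots> = (\<Sum>x\<in>paths (3 * n). ennreal (path_prob p q (3 * n) x) * emeasure (Q {..<n} x) B)"
      by (simp add: Q_def PiM_D emeasure_density)
    finally show ?thesis by simp
  qed
  finally show "emeasure (law_Y' p q f0 f1 n) B = emeasure (density ?Pn (GY p q n)) B" .
qed

lemma sigma_finite_Pn: "sigma_finite_measure (PiM I (\<lambda>_. lborel :: real measure))" if "finite I"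
  using that by (intro product_sigma_finite.sigma_finite) (auto simp: product_sigma_finite_def intro: sigma_finite_lborel)

lemma prod_emeasure:
  assumes p: "0 < p" "p \<le> 1" and q: "0 < q" "q \<le> 1"
  assumes A: "A \<in> sets (PiM {..<n} (\<lambda>_. lborel) \<Otimes>\<^sub>M PiM {..<n} (\<lambda>_. lborel))"
  shows "emeasure (law_Y' p q f0 f1 n \<Otimes>\<^sub>M law_Y' p q f0 f1 n) A =
    (\<Sum>x\<in>paths (3 * n). \<Sum>x'\<in>paths (3 * n). ennreal (path_prob p q (3 * n) x) * ennreal (path_prob p q (3 * n) x') *
       emeasure (Q {..<n} (restrict x {..<n}) \<Otimes>\<^sub>M Q {..<n} (restrict x' {..<n})) A)"
proof -
  let ?Pn = "PiM {..<n} (\<lambda>_. lborel) :: (nat \<Rightarrow> real) measure"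
  let ?d = "\<lambda>x y. \<Prod>i\<in>{..<n}. ennreal (emis f0 f1 (x i) (y i))"
  have fin: "finite_measure (law_Y' p q f0 f1 n)"
    unfolding law_Y'_def by (intro finite_measure.finite_measure_distr hmm_finite[OF p q]) measurable
  have sfG: "sigma_finite_measure (density ?Pn (GY p q n))"
    using fin law_Y'_dens[OF p q, of n] by (metis finite_measure.axioms(1))
  have sfQ: "sigma_finite_measure (density ?Pn (?d x))" for x
    using prob_Q[of "{..<n}" x] by (simp add: Q_def PiM_D prob_space_imp_sigma_finite)
  have [measurable]: "A \<in> sets (?Pn \<Otimes>\<^sub>M ?Pn)" using A by simp
  have "emeasure (law_Y' p q f0 f1 n \<Otimes>\<^sub>M law_Y' p q f0 f1 n) A =
      emeasure (density (?Pn \<Otimes>\<^sub>M ?Pn) (\<lambda>(y, y'). GY p q n y * GY p q n y')) A"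
    unfolding law_Y'_dens[OF p q]
    by (subst pair_measure_density) (auto intro: sigma_finite_Pn sfG)
  also have "\<dots> = (\<integral>\<^sup>+ w. (\<lambda>(y, y'). GY p q n y * GY p q n y') w * indicator A w \<partial>(?Pn \<Otimes>\<^sub>M ?Pn))"
    by (rule emeasure_density) measurable
  also have "\<dots> = (\<integral>\<^sup>+ w. (\<Sum>x\<in>paths (3 * n). \<Sum>x'\<in>paths (3 * n). ennreal (path_prob p q (3 * n) x) * ennreal (path_prob p q (3 * n) x') *
       ((\<lambda>(y, y'). ?d x y * ?d x' y') w * indicator A w)) \<partial>(?Pn \<Otimes>\<^sub>M ?Pn))"
  proof (intro nn_integral_cong)
    fix w :: "(nat \<Rightarrow> real) \<times> (nat \<Rightarrow> real)"
    have pt: "GY p q n y * GY p q n y' = (\<Sum>x\<in>paths (3 * n). \<Sum>x'\<in>paths (3 * n).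
        ennreal (path_prob p q (3 * n) x) * ennreal (path_prob p q (3 * n) x') * (?d x y * ?d x' y'))" for y y'
      by (simp only: GY_def sum_product) (simp add: mult_ac)
    show "(\<lambda>(y, y'). GY p q n y * GY p q n y') w * indicator A w = (\<Sum>x\<in>paths (3 * n). \<Sum>x'\<in>paths (3 * n). ennreal (path_prob p q (3 * n) x) * ennreal (path_prob p q (3 * n) x') *
       ((\<lambda>(y, y'). ?d x y * ?d x' y') w * indicator A w))"
      by (simp only: case_prod_beta pt sum_distrib_right mult.assoc)
  qed
  also have "\<dots> = (\<Sum>x\<in>paths (3 * n). \<Sum>x'\<in>paths (3 * n). ennreal (path_prob p q (3 * n) x) * ennreal (path_prob p q (3 * n) x') *
       (\<integral>\<^sup>+ w. (\<lambda>(y, y'). ?d x y * ?d x' y') w * indicator A w \<partial>(?Pn \<Otimes>\<^sub>M ?Pn)))"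
    by (simp add: nn_integral_sum nn_integral_cmult)
  also have "\<dots> = (\<Sum>x\<in>paths (3 * n). \<Sum>x'\<in>paths (3 * n). ennreal (path_prob p q (3 * n) x) * ennreal (path_prob p q (3 * n) x') *
       emeasure (Q {..<n} x \<Otimes>\<^sub>M Q {..<n} x') A)"
  proof (intro sum.cong refl arg_cong2[where f = "(*)"])
    fix x x'
    have "Q {..<n} x \<Otimes>\<^sub>M Q {..<n} x' = density (?Pn \<Otimes>\<^sub>M ?Pn) (\<lambda>(y, y'). ?d x y * ?d x' y')"
      unfolding Q_def PiM_D[OF finite_lessThan]
      by (rule pair_measure_density) (auto intro: sigma_finite_Pn sfQ)
    then show "(\<integral>\<^sup>+ w. (\<lambda>(y, y'). ?d x y * ?d x' y') w * indicator A w \<partial>(?Pn \<Otimes>\<^sub>M ?Pn)) = emeasure (Q {..<n} x \<Otimes>\<^sub>M Q {..<n} x') A"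
      by (simp add: emeasure_density)
  qed
  finally show ?thesis by (simp only: Q_restrict[symmetric])
qed


lemma prob_R: "prob_space (Q I z \<Otimes>\<^sub>M Q J z')"
proof -
  interpret a: prob_space "Q I z" by (rule prob_Q)
  interpret b: prob_space "Q J z'" by (rule prob_Q)
  interpret pair_prob_space "Q I z" "Q J z'" by unfold_locales
  show ?thesis by (rule P.prob_space_axioms)
qed

lemma sets_R: "sets (Q {..<n} z \<Otimes>\<^sub>M Q {..<n} z') = sets (PiM {..<n} (\<lambda>_. lborel) \<Otimes>\<^sub>M PiM {..<n} (\<lambda>_. lborel))"
  by (intro sets_pair_measure_cong sets_Q)

lemma tv_bound:
  assumes p: "0 < p" "p \<le> 1" and q: "0 < q" "q \<le> 1"
  shows "tv_dist (law_pair p q f0 f1 n) (law_Y' p q f0 f1 n \<Otimes>\<^sub>M law_Y' p q f0 f1 n) \<le> 2 * \<bar>1 - p - q\<bar> ^ (n + 1)"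
  unfolding tv_dist_def
proof (rule cSUP_least)
  show "sets (law_pair p q f0 f1 n) \<noteq> {}" using sets.empty_sets by blast
  fix A assume "A \<in> sets (law_pair p q f0 f1 n)"
  then have A: "A \<in> sets (PiM {..<n} (\<lambda>_. lborel) \<Otimes>\<^sub>M PiM {..<n} (\<lambda>_. lborel))"
    by (simp add: law_pair_def)
  define F where "F z z' = measure (Q {..<n} z \<Otimes>\<^sub>M Q {..<n} z') A" for z z'
  have eF: "emeasure (Q {..<n} z \<Otimes>\<^sub>M Q {..<n} z') A = ennreal (F z z')" for z z'
    unfolding F_def by (rule finite_measure.emeasure_eq_measure[OF prob_space.axioms(1)[OF prob_R]])
  have F0: "0 \<le> F z z'" for z z' by (simp add: F_def)
  have F1: "F z z' \<le> 1" for z z'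
    unfolding F_def by (rule prob_space.prob_le_1[OF prob_R])
  have ppn: "0 \<le> path_prob p q (3 * n) x" for x by (rule path_prob_nonneg[OF p q])
  have m1: "measure (law_pair p q f0 f1 n) A = (\<Sum>x\<in>paths (3 * n). path_prob p q (3 * n) x * F (restrict x {..<n}) (\<lambda>i\<in>{..<n}. x (2 * n + i)))"
    unfolding measure_def law_pair_emeasure[OF p q A] eF
    using ppn F0 by (simp add: ennreal_mult[symmetric] sum_nonneg)
  have m2: "measure (law_Y' p q f0 f1 n \<Otimes>\<^sub>M law_Y' p q f0 f1 n) A = (\<Sum>x\<in>paths (3 * n). \<Sum>x'\<in>paths (3 * n). path_prob p q (3 * n) x * path_prob p q (3 * n) x' *
          F (restrict x {..<n}) (restrict x' {..<n}))"
    unfolding measure_def prod_emeasure[OF p q A] eF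
    using ppn F0 by (simp add: ennreal_mult[symmetric] sum_nonneg)
  show "\<bar>measure (law_pair p q f0 f1 n) A - measure (law_Y' p q f0 f1 n \<Otimes>\<^sub>M law_Y' p q f0 f1 n) A\<bar> \<le> 2 * \<bar>1 - p - q\<bar> ^ (n + 1)"
    unfolding m1 m2 by (rule comb_main[OF p q F0 F1])
qed

end


lemma main_bound:
  fixes p q :: real and f0 f1 :: "real \<Rightarrow> real" and \<gamma> :: real and n :: nat
  assumes h: "0 < p \<and> p \<le> 1 \<and> 0 < q \<and> q \<le> 1 \<and> prob_density01 f0 \<and> prob_density01 f1 \<and> 1 - \<bar>1 - p - q\<bar> \<ge> \<gamma>"
  shows "tv_dist (law_pair p q f0 f1 n) (law_Y' p q f0 f1 n \<Otimes>\<^sub>M law_Y' p q f0 f1 n) \<le> 2 * exp (- 1 * \<gamma> * real n)"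
proof -
  from h have p: "0 < p" "p \<le> 1" and q: "0 < q" "q \<le> 1" and f: "prob_density01 f0" "prob_density01 f1"
    and g: "\<bar>1 - p - q\<bar> \<le> 1 - \<gamma>" by auto
  have tv: "tv_dist (law_pair p q f0 f1 n) (law_Y' p q f0 f1 n \<Otimes>\<^sub>M law_Y' p q f0 f1 n) \<le> 2 * \<bar>1 - p - q\<bar> ^ (n + 1)"
    by (rule tv_bound[OF f p q])
  have l1: "\<bar>1 - p - q\<bar> \<le> 1" using p q by auto
  have "\<bar>1 - p - q\<bar> ^ (n + 1) \<le> \<bar>1 - p - q\<bar> ^ n"
    by (rule power_decreasing) (use l1 in auto)
  also have "\<dots> \<le> (1 - \<gamma>) ^ n"
    by (rule power_mono[OF g]) simp
  also have "\<dots> \<le> exp (- \<gamma>) ^ n"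
  proof (rule power_mono)
    show "1 - \<gamma> \<le> exp (- \<gamma>)" using exp_ge_add_one_self[of "- \<gamma>"] by simp
    show "0 \<le> 1 - \<gamma>" using g by (meson abs_ge_zero order_trans)
  qed
  also have "\<dots> = exp (- 1 * \<gamma> * real n)"
    by (simp add: exp_of_nat_mult[symmetric] mult.commute)
  finally show ?thesis
    using tv by linarith
qed


theorem proposition1:
  "\<exists>C c :: real. C > 0 \<and> c > 0 \<and>
     (\<forall>p q :: real. \<forall>f0 f1 :: real \<Rightarrow> real. \<forall>\<gamma> :: real. \<forall>n :: nat.
        0 < p \<and> p \<le> 1 \<and> 0 < q \<and> q \<le> 1 \<and>
        prob_density01 f0 \<and> prob_density01 f1 \<and>
        1 - \<bar>1 - p - q\<bar> \<ge> \<gamma> \<longrightarrow>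
        tv_dist (law_pair p q f0 f1 n) (law_Y' p q f0 f1 n \<Otimes>\<^sub>M law_Y' p q f0 f1 n)
          \<le> C * exp (- c * \<gamma> * real n))"
proof -
  have "\<forall>p q :: real. \<forall>f0 f1 :: real \<Rightarrow> real. \<forall>\<gamma> :: real. \<forall>n :: nat.
        0 < p \<and> p \<le> 1 \<and> 0 < q \<and> q \<le> 1 \<and>
        prob_density01 f0 \<and> prob_density01 f1 \<and>
        1 - \<bar>1 - p - q\<bar> \<ge> \<gamma> \<longrightarrow>
        tv_dist (law_pair p q f0 f1 n) (law_Y' p q f0 f1 n \<Otimes>\<^sub>M law_Y' p q f0 f1 n)
          \<le> 2 * exp (- 1 * \<gamma> * real n)"
    using main_bound by blast
  then show ?thesis by (intro exI[of _ "2::real"] exI[of _ "1::real"]) simp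
qed

end
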